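(* Let $\Delta,\Delta'$ be disjoint subsets of a finite alphabet $\Sigma$, and let $L\subseteq\Sigma^\omega$ be an aperiodic language such that each string in $L$ contains exactly one occurrence of a symbol from $\Delta$ and exactly one occurrence of a symbol from $\Delta'$. Then $L$ can be written as a finite union of disjoint languages $R_\ell\, a\, R_m\, b\, R_r$ where $(a,b)\in(\Delta\times\Delta')\cup(\Delta'\times\Delta)$, $R_\ell,R_m\subseteq(\Sigma\setminus(\Delta\cup\Delta'))^*$ and $R_r\subseteq(\Sigma\setminus(\Delta\cup\Delta'))^\omega$. Moreover $R_\ell$, $R_m$ and $R_r$ are aperiodic.
   Context: A finite monoid $M$ is aperiodic if there is $n$ with $x^n=x^{n+1}$ for all $x\in M$. A language $K\subseteq\Sigma^*$ is aperiodic if it is recognized by a morphism $h:\Sigma^*\to M$ to a finite aperiodic monoid (i.e. $K=h^{-1}(h(K))$). For $\omega$-languages: given a morphism $h:\Sigma^*\to M$ to a finite monoid, $\omega$-strings $u,v$ are $h$-similar if they factor as $u=u_1u_2\cdots$, $v=v_1v_2\cdots$ with $u_i,v_i\in\Sigma^+$ and $h(u_i)=h(v_i)$; let $\cong$ be its transitive closure; $h$ recognizes $L\subseteq\Sigma^\omega$ if $w\in L$ and $u\cong w$ imply $u\in L$; $L$ is aperiodic if recognized by a morphism to a finite aperiodic monoid. *)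

theory Defs
  imports "HOL-Algebra.Group" "HOL-Library.Omega_Words_Fun"
begin

text \<open>A finite aperiodic monoid. Monoids are represented with carrier of type nat
  (every finite monoid is isomorphic to one on a subset of nat).\<close>
definition finite_aperiodic_monoid :: "nat monoid \<Rightarrow> bool" where
  "finite_aperiodic_monoid M \<longleftrightarrow> monoid M \<and> finite (carrier M) \<and>
     (\<exists>n::nat. \<forall>x\<in>carrier M. x [^]\<^bsub>M\<^esub> n = x [^]\<^bsub>M\<^esub> (Suc n))"

definition word_morphism :: "('a list \<Rightarrow> nat) \<Rightarrow> nat monoid \<Rightarrow> bool" where
  "word_morphism h M \<longleftrightarrow> (\<forall>u. h u \<in> carrier M) \<and> h [] = \<one>\<^bsub>M\<^esub> \<and>
     (\<forall>u v. h (u @ v) = h u \<otimes>\<^bsub>M\<^esub> h v)"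

definition aperiodic_lang :: "'a list set \<Rightarrow> bool" where
  "aperiodic_lang K \<longleftrightarrow> (\<exists>(M::nat monoid) (h::'a list \<Rightarrow> nat).
     finite_aperiodic_monoid M \<and> word_morphism h M \<and> K = h -` (h ` K))"

text \<open>h-similarity of omega-words: factorizations u = u_0 u_1 ..., v = v_0 v_1 ...
  into nonempty finite words (cut points given by strictly increasing s, t starting at 0)
  with h(u_i) = h(v_i).\<close>
definition h_similar :: "('a list \<Rightarrow> nat) \<Rightarrow> 'a word \<Rightarrow> 'a word \<Rightarrow> bool" where
  "h_similar h u v \<longleftrightarrow> (\<exists>s t :: nat \<Rightarrow> nat. strict_mono s \<and> strict_mono t \<and> s 0 = 0 \<and> t 0 = 0 \<and>
     (\<forall>i. h (subsequence u (s i) (s (Suc i))) = h (subsequence v (t i) (t (Suc i)))))"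

definition recognizes_omega :: "('a list \<Rightarrow> nat) \<Rightarrow> 'a word set \<Rightarrow> bool" where
  "recognizes_omega h L \<longleftrightarrow> (\<forall>w u. w \<in> L \<and> (h_similar h)\<^sup>*\<^sup>* u w \<longrightarrow> u \<in> L)"

definition aperiodic_omega_lang :: "'a word set \<Rightarrow> bool" where
  "aperiodic_omega_lang L \<longleftrightarrow> (\<exists>(M::nat monoid) (h::'a list \<Rightarrow> nat).
     finite_aperiodic_monoid M \<and> word_morphism h M \<and> recognizes_omega h L)"

definition concat_lang :: "'a list set \<Rightarrow> 'a \<Rightarrow> 'a list set \<Rightarrow> 'a \<Rightarrow> 'a word set \<Rightarrow> 'a word set" where
  "concat_lang Rl a Rm b Rr = {conc (x @ [a] @ y @ [b]) z | x y z. x \<in> Rl \<and> y \<in> Rm \<and> z \<in> Rr}"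

end

theory Submission imports Defs begin


definition zmon :: "nat monoid \<Rightarrow> nat \<Rightarrow> nat monoid" where
  "zmon M z = \<lparr>carrier = insert z (carrier M),
     mult = (\<lambda>x y. if x = z \<or> y = z then z else x \<otimes>\<^bsub>M\<^esub> y), one = \<one>\<^bsub>M\<^esub>\<rparr>"

lemma zmon_monoid:
  assumes "monoid M" "z \<notin> carrier M"
  shows "monoid (zmon M z)"
proof -
  interpret monoid M by fact
  show ?thesis
    apply (unfold_locales)
    using assms(2) by (auto simp: zmon_def m_assoc)
qed

lemma zmon_pow_M:
  assumes "monoid M" "z \<notin> carrier M" "x \<in> carrier M"
  shows "x [^]\<^bsub>zmon M z\<^esub> (n::nat) = x [^]\<^bsub>M\<^esub> n"
proof -
  interpret monoid M by fact
  show ?thesis using assms by (induct n) (auto simp: zmon_def)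
qed

lemma zmon_pow_z:
  shows "z [^]\<^bsub>zmon M z\<^esub> (Suc n) = z"
  by (induct n) (auto simp: zmon_def)

lemma zmon_aperiodic:
  assumes "finite_aperiodic_monoid M" "z \<notin> carrier M"
  shows "finite_aperiodic_monoid (zmon M z)"
proof -
  from assms(1) have mM: "monoid M" and fin: "finite (carrier M)"
    and ap: "\<exists>n::nat. \<forall>x\<in>carrier M. x [^]\<^bsub>M\<^esub> n = x [^]\<^bsub>M\<^esub> (Suc n)"
    unfolding finite_aperiodic_monoid_def by auto
  interpret monoid M by fact
  obtain n where n: "\<forall>x\<in>carrier M. x [^]\<^bsub>M\<^esub> n = x [^]\<^bsub>M\<^esub> (Suc n)" using ap by blast
  have "\<forall>x\<in>carrier (zmon M z). x [^]\<^bsub>zmon M z\<^esub> (Suc n) = x [^]\<^bsub>zmon M z\<^esub> (Suc (Suc n))"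
  proof
    fix x assume "x \<in> carrier (zmon M z)"
    then have "x = z \<or> x \<in> carrier M" by (simp add: zmon_def)
    then show "x [^]\<^bsub>zmon M z\<^esub> (Suc n) = x [^]\<^bsub>zmon M z\<^esub> (Suc (Suc n))"
    proof
      assume "x = z" then show ?thesis using zmon_pow_z by metis
    next
      assume x: "x \<in> carrier M"
      have "x [^]\<^bsub>M\<^esub> (Suc n) = x [^]\<^bsub>M\<^esub> (Suc (Suc n))"
        using n x by (metis nat_pow_Suc)
      then show ?thesis using zmon_pow_M[OF mM assms(2) x, of "Suc n"] zmon_pow_M[OF mM assms(2) x, of "Suc (Suc n)"] by argo
    qed
  qed
  moreover have "finite (carrier (zmon M z))" using fin by (simp add: zmon_def)
  ultimately show ?thesis unfolding finite_aperiodic_monoid_def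
    using zmon_monoid[OF mM assms(2)] by blast
qed

definition zh :: "('a list \<Rightarrow> nat) \<Rightarrow> 'a set \<Rightarrow> nat \<Rightarrow> 'a list \<Rightarrow> nat" where
  "zh h G z w = (if w \<in> lists G then h w else z)"

lemma zh_morph:
  assumes "word_morphism h M" "z \<notin> carrier M"
  shows "word_morphism (zh h G z) (zmon M z)"
  using assms unfolding word_morphism_def zh_def zmon_def
  by (auto; metis)



lemma interval_ex:
  assumes "strict_mono (s::nat\<Rightarrow>nat)" "s 0 = 0"
  shows "\<exists>i. s i \<le> k \<and> k < s (Suc i)"
proof -
  have ex: "\<exists>i. k < s (Suc i)"
    using strict_mono_imp_increasing[OF assms(1), of "Suc k"] Suc_le_lessD by blast
  define i0 where "i0 = (LEAST i. k < s (Suc i))"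
  have 1: "k < s (Suc i0)" unfolding i0_def using ex by (rule LeastI_ex)
  have 2: "s i0 \<le> k"
  proof (cases i0)
    case 0 then show ?thesis using assms(2) by simp
  next
    case (Suc j)
    then have "\<not> k < s (Suc j)" using not_less_Least[of j "\<lambda>i. k < s (Suc i)"] i0_def by auto
    then show ?thesis using Suc by simp
  qed
  show ?thesis using 1 2 by blast
qed

lemma transfer_sim:
  assumes "word_morphism h M" "z \<notin> carrier M" "h_similar (zh h G z) u v" "range v \<subseteq> G"
  shows "range u \<subseteq> G \<and> h_similar h u v"
proof -
  obtain s t where st: "strict_mono s" "strict_mono t" "s 0 = 0" "t 0 = 0"
    and eq: "\<forall>i. zh h G z (subsequence u (s i) (s (Suc i))) = zh h G z (subsequence v (t i) (t (Suc i)))"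
    using assms(3) unfolding h_similar_def by blast
  have hc: "\<And>w. h w \<noteq> z" using assms(1,2) unfolding word_morphism_def by metis
  have vG: "subsequence v a b \<in> lists G" for a b using assms(4) by (auto simp: in_lists_conv_set)
  have uG: "subsequence u (s i) (s (Suc i)) \<in> lists G" for i
    using eq[rule_format, of i] vG[of "t i" "t (Suc i)"] hc unfolding zh_def by (auto split: if_splits)
  have heq: "h (subsequence u (s i) (s (Suc i))) = h (subsequence v (t i) (t (Suc i)))" for i
    using eq[rule_format, of i] vG[of "t i" "t (Suc i)"] uG[of i] unfolding zh_def by auto
  have "range u \<subseteq> G"
  proof
    fix c assume "c \<in> range u"
    then obtain k where k: "c = u k" by auto
    obtain i where "s i \<le> k" "k < s (Suc i)" using interval_ex[OF st(1,3)] by blast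
    then have "u k \<in> set (subsequence u (s i) (s (Suc i)))" by simp
    then show "c \<in> G" using uG[of i] k by auto
  qed
  moreover have "h_similar h u v" unfolding h_similar_def using st heq by blast
  ultimately show ?thesis by blast
qed

lemma subseq_conc_shift:
  "subsequence (p \<frown> u) (length p + a) (length p + b) = subsequence u a b"
  by (rule nth_equalityI) auto

lemma subseq_conc_0:
  "subsequence (p \<frown> u) 0 (length p + b) = p @ subsequence u 0 b"
  by (rule nth_equalityI) (auto simp: nth_append)

lemma sim_conc:
  assumes "word_morphism h M" "h_similar h u v" "h p = h p'"
  shows "h_similar h (p \<frown> u) (p' \<frown> v)"
proof -
  obtain s t where st: "strict_mono s" "strict_mono t" "s 0 = 0" "t 0 = 0"
    and eq: "\<forall>i. h (subsequence u (s i) (s (Suc i))) = h (subsequence v (t i) (t (Suc i)))"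
    using assms(2) unfolding h_similar_def by blast
  define s' where "s' i = (if i = 0 then 0 else length p + s i)" for i
  define t' where "t' i = (if i = 0 then 0 else length p' + t i)" for i
  have sm: "strict_mono s'" unfolding s'_def
    using st by (auto simp: strict_mono_Suc_iff) (metis)
  have tm: "strict_mono t'" unfolding t'_def
    using st by (auto simp: strict_mono_Suc_iff) (metis)
  have "h (subsequence (p \<frown> u) (s' i) (s' (Suc i))) = h (subsequence (p' \<frown> v) (t' i) (t' (Suc i)))" for i
  proof (cases i)
    case 0
    have "h (subsequence (p \<frown> u) (s' i) (s' (Suc i))) = h (p @ subsequence u 0 (s 1))"
      using 0 by (simp add: s'_def subseq_conc_0[of p u "s 1", simplified])
    also have "\<dots> = h p \<otimes>\<^bsub>M\<^esub> h (subsequence u (s 0) (s 1))" using assms(1) st(3)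
      unfolding word_morphism_def by simp
    also have "\<dots> = h p' \<otimes>\<^bsub>M\<^esub> h (subsequence v (t 0) (t 1))" using eq assms(3) by (metis One_nat_def)
    also have "\<dots> = h (p' @ subsequence v 0 (t 1))" using assms(1) st(4)
      unfolding word_morphism_def by simp
    also have "\<dots> = h (subsequence (p' \<frown> v) (t' i) (t' (Suc i)))"
      using 0 by (simp add: t'_def subseq_conc_0[of p' v "t 1", simplified])
    finally show ?thesis .
  next
    case (Suc j)
    then show ?thesis using eq by (simp add: s'_def t'_def subseq_conc_shift)
  qed
  then show ?thesis unfolding h_similar_def using sm tm
    by (intro exI[of _ s'] exI[of _ t']) (auto simp: s'_def t'_def)
qed

lemma sim_refl: "h_similar h z z"
  unfolding h_similar_def by (intro exI[of _ id]) (auto simp: strict_mono_def)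

lemma uniq1:
  assumes "x1 \<in> lists G" "x2 \<in> lists G" "a1 \<notin> G" "a2 \<notin> G"
    "(x1 @ [a1]) \<frown> w1 = (x2 @ [a2]) \<frown> w2"
  shows "x1 = x2 \<and> a1 = a2 \<and> w1 = w2"
proof -
  have L: "length x1 = length x2"
  proof (rule ccontr)
    assume "length x1 \<noteq> length x2"
    then consider "length x1 < length x2" | "length x2 < length x1" by linarith
    then show False
    proof cases
      case 1
      have "((x1 @ [a1]) \<frown> w1) (length x1) = a1" by (simp add: nth_append)
      moreover have "((x2 @ [a2]) \<frown> w2) (length x1) = x2 ! length x1" using 1 by (simp add: nth_append)
      moreover have "x2 ! length x1 \<in> G" using 1 assms(2) by (auto simp: in_lists_conv_set)
      ultimately show False using assms(3,5) by metis
    next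
      case 2
      have "((x2 @ [a2]) \<frown> w2) (length x2) = a2" by (simp add: nth_append)
      moreover have "((x1 @ [a1]) \<frown> w1) (length x2) = x1 ! length x2" using 2 by (simp add: nth_append)
      moreover have "x1 ! length x2 \<in> G" using 2 assms(1) by (auto simp: in_lists_conv_set)
      ultimately show False using assms(4,5) by metis
    qed
  qed
  then show ?thesis using assms(5) concat_eq[of "x1 @ [a1]" "x2 @ [a2]" w1 w2] by auto
qed

lemma uniq2:
  assumes "x1 \<in> lists G" "x2 \<in> lists G" "y1 \<in> lists G" "y2 \<in> lists G"
    "a1 \<notin> G" "a2 \<notin> G" "b1 \<notin> G" "b2 \<notin> G"
    "(x1 @ [a1] @ y1 @ [b1]) \<frown> z1 = (x2 @ [a2] @ y2 @ [b2]) \<frown> z2"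
  shows "x1 = x2 \<and> a1 = a2 \<and> y1 = y2 \<and> b1 = b2 \<and> z1 = z2"
proof -
  have "(x1 @ [a1]) \<frown> ((y1 @ [b1]) \<frown> z1) = (x2 @ [a2]) \<frown> ((y2 @ [b2]) \<frown> z2)"
    using assms(9) by simp
  then have 1: "x1 = x2 \<and> a1 = a2 \<and> (y1 @ [b1]) \<frown> z1 = (y2 @ [b2]) \<frown> z2"
    using uniq1[OF assms(1,2,5,6)] by blast
  then show ?thesis using uniq1[OF assms(3,4,7,8)] by blast
qed

lemma assoc4: "(x @ [a] @ y @ [b]) \<frown> z = x \<frown> (a ## (y \<frown> (b ## z)))"
  by (simp only: conc_conc[symmetric] build_cons conc_empty append.simps)

lemma decomp:
  assumes "D1 \<inter> D2 = {}" "\<exists>!k. w k \<in> D1" "\<exists>!k. w k \<in> D2"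
  shows "\<exists>x a y b z. w = (x @ [a] @ y @ [b]) \<frown> z \<and> x \<in> lists (UNIV - (D1 \<union> D2)) \<and>
     y \<in> lists (UNIV - (D1 \<union> D2)) \<and> range z \<subseteq> UNIV - (D1 \<union> D2) \<and>
     (a, b) \<in> (D1 \<times> D2) \<union> (D2 \<times> D1)"
proof -
  obtain k1 where k1: "w k1 \<in> D1" "\<And>k. w k \<in> D1 \<Longrightarrow> k = k1" using assms(2) by blast
  obtain k2 where k2: "w k2 \<in> D2" "\<And>k. w k \<in> D2 \<Longrightarrow> k = k2" using assms(3) by blast
  have ne: "k1 \<noteq> k2" using k1(1) k2(1) assms(1) by blast
  define p where "p = min k1 k2"
  define q where "q = max k1 k2"
  have pq: "p < q" using ne by (simp add: p_def q_def)
  have G: "w k \<in> UNIV - (D1 \<union> D2)" if "k \<noteq> p" "k \<noteq> q" for k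
  proof -
    have "k \<noteq> k1" "k \<noteq> k2" using that by (auto simp: p_def q_def)
    then show ?thesis using k1(2)[of k] k2(2)[of k] by blast
  qed
  have eq: "w = (prefix p w @ [w p] @ subsequence w (Suc p) q @ [w q]) \<frown> suffix (Suc q) w"
  proof -
    have "w = prefix p w \<frown> suffix p w" by (rule prefix_suffix)
    also have "suffix p w = w p ## suffix (Suc p) w" by (rule suffix_singleton_suffix[symmetric])
    also have "suffix (Suc p) w = subsequence w (Suc p) q \<frown> suffix q w"
      using pq by (simp only: suffix_subseq_join Suc_leI)
    also have "suffix q w = w q ## suffix (Suc q) w" by (rule suffix_singleton_suffix[symmetric])
    finally show ?thesis by (simp only: assoc4)
  qed
  have "prefix p w \<in> lists (UNIV - (D1 \<union> D2))"
    unfolding in_lists_conv_set set_subsequence using G pq by fastforce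
  moreover have "subsequence w (Suc p) q \<in> lists (UNIV - (D1 \<union> D2))"
    unfolding in_lists_conv_set set_subsequence using G pq by fastforce
  moreover have "range (suffix (Suc q) w) \<subseteq> UNIV - (D1 \<union> D2)"
    unfolding suffix_def using G pq by fastforce
  moreover have "(w p, w q) \<in> (D1 \<times> D2) \<union> (D2 \<times> D1)"
  proof (cases "k1 < k2")
    case True then show ?thesis using k1(1) k2(1) by (simp add: p_def q_def)
  next
    case False then have "k2 < k1" using ne by linarith
    then show ?thesis using k1(1) k2(1) by (simp add: p_def q_def)
  qed
  ultimately show ?thesis using eq by (intro exI conjI) assumption+
qed



theorem mainTheorem7:
  fixes \<Delta> \<Delta>' :: "'a::finite set" and L :: "'a word set"
  assumes "\<Delta> \<inter> \<Delta>' = {}"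
    and "aperiodic_omega_lang L"
    and "\<forall>w\<in>L. (\<exists>!k. w k \<in> \<Delta>) \<and> (\<exists>!k. w k \<in> \<Delta>')"
  shows "\<exists>(n::nat) (Rl :: nat \<Rightarrow> 'a list set) (a :: nat \<Rightarrow> 'a) (Rm :: nat \<Rightarrow> 'a list set)
            (b :: nat \<Rightarrow> 'a) (Rr :: nat \<Rightarrow> 'a word set).
     L = (\<Union>i<n. concat_lang (Rl i) (a i) (Rm i) (b i) (Rr i)) \<and>
     (\<forall>i<n. \<forall>j<n. i \<noteq> j \<longrightarrow>
        concat_lang (Rl i) (a i) (Rm i) (b i) (Rr i) \<inter> concat_lang (Rl j) (a j) (Rm j) (b j) (Rr j) = {}) \<and>
     (\<forall>i<n. (a i, b i) \<in> (\<Delta> \<times> \<Delta>') \<union> (\<Delta>' \<times> \<Delta>) \<and>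
        Rl i \<subseteq> lists (UNIV - (\<Delta> \<union> \<Delta>')) \<and> Rm i \<subseteq> lists (UNIV - (\<Delta> \<union> \<Delta>')) \<and>
        (\<forall>z\<in>Rr i. range z \<subseteq> UNIV - (\<Delta> \<union> \<Delta>')) \<and>
        aperiodic_lang (Rl i) \<and> aperiodic_lang (Rm i) \<and> aperiodic_omega_lang (Rr i))"
proof -
  obtain M h where Map: "finite_aperiodic_monoid M" and hm: "word_morphism h M"
    and rec: "recognizes_omega h L"
    using assms(2) unfolding aperiodic_omega_lang_def by blast
  have fin: "finite (carrier M)" using Map unfolding finite_aperiodic_monoid_def by blast
  obtain z where zn: "z \<notin> carrier M" using ex_new_if_finite[OF infinite_UNIV_nat fin] by blast
  define \<Gamma> where "\<Gamma> = UNIV - (\<Delta> \<union> \<Delta>')"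
  define h' where "h' = zh h \<Gamma> z"
  define M' where "M' = zmon M z"
  have M'ap: "finite_aperiodic_monoid M'" unfolding M'_def by (rule zmon_aperiodic[OF Map zn])
  have h'm: "word_morphism h' M'" unfolding M'_def h'_def by (rule zh_morph[OF hm zn])
  have hc: "\<And>w. h w \<in> carrier M" using hm unfolding word_morphism_def by blast
  have hmul: "\<And>u v. h (u @ v) = h u \<otimes>\<^bsub>M\<^esub> h v" using hm unfolding word_morphism_def by blast
  define RL where "RL m = {x \<in> lists \<Gamma>. h x = m}" for m
  define RR where "RR m1 a m2 b = {zz. range zz \<subseteq> \<Gamma> \<and> (\<exists>x y. x \<in> lists \<Gamma> \<and> h x = m1 \<and>
      y \<in> lists \<Gamma> \<and> h y = m2 \<and> (x @ [a] @ y @ [b]) \<frown> zz \<in> L)}" for m1 a m2 b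
  define CL where "CL t = (case t of (m1, a, m2, b) \<Rightarrow> concat_lang (RL m1) a (RL m2) b (RR m1 a m2 b))" for t
  define T where "T = {(m1, a, m2, b). m1 \<in> carrier M \<and> m2 \<in> carrier M \<and> (a, b) \<in> (\<Delta> \<times> \<Delta>') \<union> (\<Delta>' \<times> \<Delta>)}"
  have finT: "finite T"
  proof -
    have "T \<subseteq> carrier M \<times> UNIV \<times> carrier M \<times> UNIV" unfolding T_def by auto
    moreover have "finite (carrier M \<times> (UNIV::'a set) \<times> carrier M \<times> (UNIV::'a set))" using fin by simp
    ultimately show ?thesis by (rule finite_subset)
  qed
  obtain f where f: "bij_betw f {0..<card T} T" using ex_bij_betw_nat_finite[OF finT] by blast

  have P1: "aperiodic_lang (RL m)" for m
  proof -
    have "RL m = h' -` (h' ` RL m)"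
    proof
      show "RL m \<subseteq> h' -` (h' ` RL m)" by blast
      show "h' -` (h' ` RL m) \<subseteq> RL m"
      proof
        fix v assume "v \<in> h' -` (h' ` RL m)"
        then obtain x where x: "x \<in> RL m" "h' v = h' x" by blast
        then have "h' v = m" unfolding RL_def h'_def zh_def by auto
        then have "v \<in> lists \<Gamma>" "h v = m" using hc[of x] hc[of v] zn x unfolding h'_def zh_def RL_def
          by (auto split: if_splits)
        then show "v \<in> RL m" unfolding RL_def by blast
      qed
    qed
    then show ?thesis unfolding aperiodic_lang_def using M'ap h'm by blast
  qed

  have P2: "aperiodic_omega_lang (RR m1 a m2 b)" for m1 a m2 b
  proof -
    have "recognizes_omega h' (RR m1 a m2 b)"
      unfolding recognizes_omega_def
    proof (intro allI impI, elim conjE)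
      fix w u assume w: "w \<in> RR m1 a m2 b" and r: "(h_similar h')\<^sup>*\<^sup>* u w"
      from r w show "u \<in> RR m1 a m2 b"
      proof (induction rule: converse_rtranclp_induct)
        case base then show ?case .
      next
        case (step u v)
        from step.prems step.IH have v: "v \<in> RR m1 a m2 b" by blast
        then have rv: "range v \<subseteq> \<Gamma>" unfolding RR_def by blast
        obtain x y where xy: "x \<in> lists \<Gamma>" "h x = m1" "y \<in> lists \<Gamma>" "h y = m2"
          "(x @ [a] @ y @ [b]) \<frown> v \<in> L" using v unfolding RR_def by blast
        have tr: "range u \<subseteq> \<Gamma> \<and> h_similar h u v"
          using transfer_sim[OF hm zn, of \<Gamma> u v] step.hyps(1) rv unfolding h'_def by blast
        have "h_similar h ((x @ [a] @ y @ [b]) \<frown> u) ((x @ [a] @ y @ [b]) \<frown> v)"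
          using sim_conc[OF hm] tr by blast
        then have "(x @ [a] @ y @ [b]) \<frown> u \<in> L" using rec xy(5) unfolding recognizes_omega_def
          by blast
        then show ?case unfolding RR_def using tr xy by blast
      qed
    qed
    then show ?thesis unfolding aperiodic_omega_lang_def using M'ap h'm by blast
  qed

  have Lunion: "L = (\<Union>t\<in>T. CL t)"
  proof
    show "L \<subseteq> (\<Union>t\<in>T. CL t)"
    proof
      fix w assume wL: "w \<in> L"
      obtain x a y b zz where d: "w = (x @ [a] @ y @ [b]) \<frown> zz" "x \<in> lists \<Gamma>" "y \<in> lists \<Gamma>"
        "range zz \<subseteq> \<Gamma>" "(a, b) \<in> (\<Delta> \<times> \<Delta>') \<union> (\<Delta>' \<times> \<Delta>)"
        using decomp[OF assms(1), of w] assms(3) wL unfolding \<Gamma>_def by blast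
      have tT: "(h x, a, h y, b) \<in> T" unfolding T_def using hc d(5) by blast
      have "zz \<in> RR (h x) a (h y) b" unfolding RR_def using d wL by blast
      moreover have "x \<in> RL (h x)" "y \<in> RL (h y)" unfolding RL_def using d by auto
      ultimately have "w \<in> CL (h x, a, h y, b)" unfolding CL_def concat_lang_def using d(1) by auto
      then show "w \<in> (\<Union>t\<in>T. CL t)" using tT by blast
    qed
  next
    show "(\<Union>t\<in>T. CL t) \<subseteq> L"
    proof
      fix w assume "w \<in> (\<Union>t\<in>T. CL t)"
      then obtain m1 a m2 b where "w \<in> CL (m1, a, m2, b)" by auto
      then obtain x' y' zz where w: "w = (x' @ [a] @ y' @ [b]) \<frown> zz" "x' \<in> RL m1" "y' \<in> RL m2"
        "zz \<in> RR m1 a m2 b" unfolding CL_def concat_lang_def by auto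
      obtain x y where xy: "h x = m1" "h y = m2" "(x @ [a] @ y @ [b]) \<frown> zz \<in> L"
        using w(4) unfolding RR_def by blast
      have "h (x' @ [a] @ y' @ [b]) = h (x @ [a] @ y @ [b])"
      proof -
        have e1: "h (x' @ [a] @ y' @ [b]) = h x' \<otimes>\<^bsub>M\<^esub> (h [a] \<otimes>\<^bsub>M\<^esub> (h y' \<otimes>\<^bsub>M\<^esub> h [b]))"
          by (simp only: hmul)
        have e2: "h (x @ [a] @ y @ [b]) = h x \<otimes>\<^bsub>M\<^esub> (h [a] \<otimes>\<^bsub>M\<^esub> (h y \<otimes>\<^bsub>M\<^esub> h [b]))"
          by (simp only: hmul)
        have "h x' = h x" "h y' = h y" using w(2,3) xy unfolding RL_def by auto
        then show ?thesis using e1 e2 by simp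
      qed
      then have "h_similar h w ((x @ [a] @ y @ [b]) \<frown> zz)"
        using sim_conc[OF hm sim_refl] w(1) by blast
      then show "w \<in> L" using rec xy(3) unfolding recognizes_omega_def by blast
    qed
  qed

  have Disj: "CL t \<inter> CL t' = {}" if "t \<in> T" "t' \<in> T" "t \<noteq> t'" for t t'
  proof (rule ccontr)
    obtain m1 a m2 b where t: "t = (m1, a, m2, b)" by (cases t) auto
    obtain m1' a' m2' b' where t': "t' = (m1', a', m2', b')" by (cases t') auto
    assume "CL t \<inter> CL t' \<noteq> {}"
    then obtain w where w1: "w \<in> CL t" and w2: "w \<in> CL t'" by blast
    from w1 obtain x y zz where
      w: "w = (x @ [a] @ y @ [b]) \<frown> zz" "x \<in> RL m1" "y \<in> RL m2"
      unfolding CL_def concat_lang_def t by (simp only: prod.case mem_Collect_eq) blast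
    from w2 obtain x' y' zz' where
      w': "w = (x' @ [a'] @ y' @ [b']) \<frown> zz'" "x' \<in> RL m1'" "y' \<in> RL m2'"
      unfolding CL_def concat_lang_def t' by (simp only: prod.case mem_Collect_eq) blast
    have ab: "a \<notin> \<Gamma>" "b \<notin> \<Gamma>" "a' \<notin> \<Gamma>" "b' \<notin> \<Gamma>"
      using that(1,2) unfolding t t' T_def \<Gamma>_def by auto
    have L: "x \<in> lists \<Gamma>" "y \<in> lists \<Gamma>" "x' \<in> lists \<Gamma>" "y' \<in> lists \<Gamma>"
      using w w' unfolding RL_def by auto
    have "x = x' \<and> a = a' \<and> y = y' \<and> b = b' \<and> zz = zz'"
      using uniq2[OF L(1,3,2,4) ab(1,3,2,4)] w(1) w'(1) by metis
    moreover have "h x = m1" "h y = m2" "h x' = m1'" "h y' = m2'" using w w' unfolding RL_def by auto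
    ultimately have "t = t'" unfolding t t' by auto
    then show False using that(3) by blast
  qed

  define n where "n = card T"
  have fimg: "f ` {..<n} = T" using f unfolding n_def bij_betw_def by (simp add: atLeast0LessThan)
  have finj: "inj_on f {..<n}" using f unfolding n_def bij_betw_def by (simp add: atLeast0LessThan)
  define A0 where "A0 i = RL (fst (f i))" for i
  define a0 where "a0 i = fst (snd (f i))" for i
  define B0 where "B0 i = RL (fst (snd (snd (f i))))" for i
  define b0 where "b0 i = snd (snd (snd (f i)))" for i
  define C0 where "C0 i = RR (fst (f i)) (a0 i) (fst (snd (snd (f i)))) (b0 i)" for i
  have eqCL: "concat_lang (A0 i) (a0 i) (B0 i) (b0 i) (C0 i) = CL (f i)" for i
    unfolding CL_def A0_def a0_def B0_def b0_def C0_def by (simp add: case_prod_beta)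
  show ?thesis
  proof (rule exI[of _ n], rule exI[of _ A0], rule exI[of _ a0], rule exI[of _ B0], rule exI[of _ b0], rule exI[of _ C0], intro conjI)
    show "L = (\<Union>i<n. concat_lang (A0 i) (a0 i) (B0 i) (b0 i) (C0 i))"
      unfolding eqCL using Lunion fimg by auto
    show "\<forall>i<n. \<forall>j<n. i \<noteq> j \<longrightarrow> concat_lang (A0 i) (a0 i) (B0 i) (b0 i) (C0 i) \<inter>
        concat_lang (A0 j) (a0 j) (B0 j) (b0 j) (C0 j) = {}"
      unfolding eqCL
    proof (intro allI impI)
      fix i j assume ij: "i < n" "j < n" "i \<noteq> j"
      then have "f i \<noteq> f j" using finj unfolding inj_on_def by blast
      moreover have "f i \<in> T" "f j \<in> T" using ij fimg by auto
      ultimately show "CL (f i) \<inter> CL (f j) = {}" using Disj by blast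
    qed
    show "\<forall>i<n. (a0 i, b0 i) \<in> \<Delta> \<times> \<Delta>' \<union> \<Delta>' \<times> \<Delta> \<and>
        A0 i \<subseteq> lists (UNIV - (\<Delta> \<union> \<Delta>')) \<and> B0 i \<subseteq> lists (UNIV - (\<Delta> \<union> \<Delta>')) \<and>
        (\<forall>z\<in>C0 i. range z \<subseteq> UNIV - (\<Delta> \<union> \<Delta>')) \<and>
        aperiodic_lang (A0 i) \<and> aperiodic_lang (B0 i) \<and> aperiodic_omega_lang (C0 i)"
    proof (intro allI impI conjI)
      fix i assume "i < n"
      then have "f i \<in> T" using fimg by auto
      then show "(a0 i, b0 i) \<in> \<Delta> \<times> \<Delta>' \<union> \<Delta>' \<times> \<Delta>"
        unfolding T_def a0_def b0_def by (auto simp: case_prod_beta)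
    qed (simp_all add: P1 P2 A0_def B0_def C0_def, auto simp: RL_def RR_def \<Gamma>_def)
  qed
qed

end
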